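(* Let $S_X,S_Y$ be finite nonempty action sets, $\varphi:S_X\times S_Y\to\mathbb{R}$ and $\lambda\in[0,1)$. Suppose $\sigma_X:\mathcal{H}\to\Delta(S_X)$ is $(\varphi,\lambda)$-autocratic. Let $\mathcal{H}_Y=\bigcup_{t\ge0}S_Y^t$ (with $S_Y^0=\{\varnothing\}$ the empty history). Then there exists an opponent-conditioned strategy $\widetilde\sigma_X:\mathcal{H}_Y\to\Delta(S_X)$ that is also $(\varphi,\lambda)$-autocratic.
   Context: Two players $X,Y$ play a repeated game with finite action sets $S_X,S_Y$; $\Delta(S)$ denotes the probability distributions on $S$. Histories: $\mathcal{H}=\bigcup_{T\ge0}(S_X\times S_Y)^T$; behavioral strategies are maps $\sigma:\mathcal{H}\to\Delta(S)$; players independently draw actions each round from their strategies evaluated at the history of realized action pairs of previous rounds, with $\mathbb{E}_{\sigma_X,\sigma_Y}$ the expectation over the resulting play. An opponent-conditioned strategy $\widetilde\sigma_X:\mathcal{H}_Y\to\Delta(S_X)$ is the behavioral strategy that in round $t$ plays $\widetilde\sigma_X[s_Y^0,\dots,s_Y^{t-1}]$, where $s_Y^0,\dots,s_Y^{t-1}$ are $Y$'s realized past actions. A strategy $\sigma_X$ is $(\varphi,\lambda)$-autocratic if for every behavioral strategy $\sigma_Y$ of $Y$, $\mathbb{E}_{\sigma_X,\sigma_Y}\big[(1-\lambda)\sum_{t\ge0}\lambda^t\varphi(s_X^t,s_Y^t)\big]=0$. *)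

theory Defs
  imports "HOL-Probability.Probability"
begin

text \<open>Action sets are finite types 'x, 'y (nonempty automatically). A history is a list of
 realized action pairs, element i being round i. Delta(S) is rendered as 'a pmf.\<close>

type_synonym ('x,'y) bstrat_X = "('x \<times> 'y) list \<Rightarrow> 'x pmf"
type_synonym ('x,'y) bstrat_Y = "('x \<times> 'y) list \<Rightarrow> 'y pmf"

definition hist_prob :: "(('x \<times> 'y) list \<Rightarrow> 'x pmf) \<Rightarrow> (('x \<times> 'y) list \<Rightarrow> 'y pmf)
    \<Rightarrow> ('x \<times> 'y) list \<Rightarrow> real" where
  "hist_prob sX sY h =
     (\<Prod>t<length h. pmf (sX (take t h)) (fst (h ! t)) * pmf (sY (take t h)) (snd (h ! t)))"

definition stage_exp :: "('x::finite \<times> 'y::finite \<Rightarrow> real) \<Rightarrow> (('x \<times> 'y) list \<Rightarrow> 'x pmf)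
    \<Rightarrow> (('x \<times> 'y) list \<Rightarrow> 'y pmf) \<Rightarrow> nat \<Rightarrow> real" where
  "stage_exp phi sX sY t =
     (\<Sum>h \<in> {h :: ('x \<times> 'y) list. length h = Suc t}. hist_prob sX sY h * phi (last h))"

text \<open>Expected normalized discounted payoff
  E[(1-lambda) sum_t lambda^t phi(s^t)] = (1-lambda) sum_t lambda^t E[phi(s^t)].\<close>
definition disc_payoff :: "('x::finite \<times> 'y::finite \<Rightarrow> real) \<Rightarrow> real \<Rightarrow> (('x \<times> 'y) list \<Rightarrow> 'x pmf)
    \<Rightarrow> (('x \<times> 'y) list \<Rightarrow> 'y pmf) \<Rightarrow> real" where
  "disc_payoff phi lam sX sY = (1 - lam) * (\<Sum>t. lam ^ t * stage_exp phi sX sY t)"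

definition autocratic :: "('x::finite \<times> 'y::finite \<Rightarrow> real) \<Rightarrow> real \<Rightarrow> (('x \<times> 'y) list \<Rightarrow> 'x pmf) \<Rightarrow> bool" where
  "autocratic phi lam sX \<longleftrightarrow> (\<forall>sY :: ('x \<times> 'y) list \<Rightarrow> 'y pmf. disc_payoff phi lam sX sY = 0)"

definition opp_cond :: "('y list \<Rightarrow> 'x pmf) \<Rightarrow> ('x \<times> 'y) list \<Rightarrow> 'x pmf" where
  "opp_cond s h = s (map snd h)"

end

theory Submission
  imports Defs
begin

lemma sum_len_Suc:
  "(\<Sum>h\<in>{h::'a::finite list. length h = Suc n}. F h) = (\<Sum>h0\<in>{h. length h = n}. \<Sum>a\<in>UNIV. F (h0@[a]))"
proof -
  have eq: "{h::'a list. length h = Suc n} = (\<lambda>(h0,a). h0@[a]) ` ({h. length h = n} \<times> UNIV)"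
  proof (rule set_eqI, rule iffI)
    fix h :: "'a list" assume "h \<in> {h. length h = Suc n}"
    then have "h = butlast h @ [last h]" "length (butlast h) = n"
      by (auto intro: append_butlast_last_id[symmetric])
    then show "h \<in> (\<lambda>(h0,a). h0@[a]) ` ({h. length h = n} \<times> UNIV)"
      by (metis (mono_tags, lifting) SigmaI UNIV_I case_prod_conv image_eqI mem_Collect_eq)
  qed auto
  have inj: "inj_on (\<lambda>(h0,a). h0@[a]) ({h::'a list. length h = n} \<times> UNIV)"
    by (auto simp: inj_on_def)
  have fin: "finite {h::'a list. length h = n}"
    using finite_lists_length_eq[of "UNIV::'a set" n] by simp
  show ?thesis
    unfolding eq sum.reindex[OF inj] by (simp add: sum.cartesian_product case_prod_beta)
qed

lemma hp_snoc:
  "hist_prob sX sY (h@[a]) = hist_prob sX sY h * (pmf (sX h) (fst a) * pmf (sY h) (snd a))"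
proof -
  have "hist_prob sX sY (h@[a]) = (\<Prod>t<Suc (length h). pmf (sX (take t (h@[a]))) (fst ((h@[a]) ! t)) * pmf (sY (take t (h@[a]))) (snd ((h@[a]) ! t)))"
    by (simp add: hist_prob_def)
  also have "\<dots> = (\<Prod>t<length h. pmf (sX (take t (h@[a]))) (fst ((h@[a]) ! t)) * pmf (sY (take t (h@[a]))) (snd ((h@[a]) ! t))) * (pmf (sX h) (fst a) * pmf (sY h) (snd a))"
    by (simp add: prod.lessThan_Suc)
  also have "(\<Prod>t<length h. pmf (sX (take t (h@[a]))) (fst ((h@[a]) ! t)) * pmf (sY (take t (h@[a]))) (snd ((h@[a]) ! t))) = hist_prob sX sY h"
    unfolding hist_prob_def by (rule prod.cong) (auto simp: nth_append)
  finally show ?thesis .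
qed

lemma hp_nonneg: "0 \<le> hist_prob sX sY h"
  unfolding hist_prob_def by (auto intro!: prod_nonneg)

lemma sum_pair_pmf:
  "(\<Sum>a\<in>(UNIV::('x::finite \<times> 'y::finite) set). pmf p (fst a) * pmf q (snd a)) = 1"
proof -
  have "(\<Sum>a\<in>(UNIV::('x \<times> 'y) set). pmf p (fst a) * pmf q (snd a)) = (\<Sum>x\<in>UNIV. \<Sum>y\<in>UNIV. pmf p x * pmf q y)"
    by (simp add: UNIV_Times_UNIV[symmetric] sum.cartesian_product case_prod_beta del: UNIV_Times_UNIV)
  also have "\<dots> = (\<Sum>x\<in>UNIV. pmf p x) * (\<Sum>y\<in>UNIV. pmf q y)"
    by (simp add: sum_product)
  also have "\<dots> = 1" by (simp add: sum_pmf_eq_1)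
  finally show ?thesis .
qed

lemma marg:
  "(\<Sum>h\<in>{h::('x::finite \<times> 'y::finite) list. length h = n + k}. hist_prob sX sY h * f (take n h))
   = (\<Sum>h\<in>{h. length h = n}. hist_prob sX sY h * f h)"
proof (induction k)
  case 0
  then show ?case by (intro sum.cong) auto
next
  case (Suc k)
  have "(\<Sum>h\<in>{h::('x \<times> 'y) list. length h = n + Suc k}. hist_prob sX sY h * f (take n h))
     = (\<Sum>h0\<in>{h. length h = n + k}. \<Sum>a\<in>UNIV. hist_prob sX sY (h0@[a]) * f (take n (h0@[a])))"
    unfolding add_Suc_right sum_len_Suc by (rule refl)
  also have "\<dots> = (\<Sum>h0\<in>{h. length h = n + k}. hist_prob sX sY h0 * f (take n h0) *
        (\<Sum>a\<in>UNIV. pmf (sX h0) (fst a) * pmf (sY h0) (snd a)))"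
    by (intro sum.cong refl) (auto simp: hp_snoc sum_distrib_left mult_ac take_append)
  also have "\<dots> = (\<Sum>h0\<in>{h. length h = n + k}. hist_prob sX sY h0 * f (take n h0))"
    by (simp add: sum_pair_pmf)
  finally show ?case using Suc by simp
qed

lemma hp_sum1: "(\<Sum>h\<in>{h::('x::finite \<times> 'y::finite) list. length h = k}. hist_prob sX sY h) = 1"
  using marg[where n=0 and k=k and sX=sX and sY=sY and f="\<lambda>_. 1"] by (simp add: hist_prob_def)

lemma hp_cong:
  assumes "\<And>s. s < length h \<Longrightarrow> sX (take s h) = sX' (take s h) \<and> sY (take s h) = sY' (take s h)"
  shows "hist_prob sX sY h = hist_prob sX' sY' h"
  unfolding hist_prob_def using assms by (intro prod.cong) auto

definition sYz :: "'y list \<Rightarrow> ('x \<times> 'y) list \<Rightarrow> 'y pmf" where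
  "sYz zs h = return_pmf (zs ! length h)"

definition wt :: "(('x::finite \<times> 'y::finite) list \<Rightarrow> 'x pmf) \<Rightarrow> 'y list \<Rightarrow> 'x \<Rightarrow> real" where
  "wt sX zs x = (\<Sum>h\<in>{h. length h = length zs}. hist_prob sX (sYz zs) h * pmf (sX h) x)"

lemma wt_nonneg: "0 \<le> wt sX zs x"
  unfolding wt_def by (auto intro!: sum_nonneg simp: hp_nonneg)

lemma wt_sum: "(\<Sum>x\<in>UNIV. wt sX zs x) = 1"
proof -
  have "(\<Sum>x\<in>UNIV. wt sX zs x) = (\<Sum>h\<in>{h. length h = length zs}. hist_prob sX (sYz zs) h * (\<Sum>x\<in>UNIV. pmf (sX h) x))"
    unfolding wt_def by (simp add: sum.swap[of _ UNIV] sum_distrib_left)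
  also have "\<dots> = 1" by (simp add: sum_pmf_eq_1 hp_sum1)
  finally show ?thesis .
qed

definition sXt :: "(('x::finite \<times> 'y::finite) list \<Rightarrow> 'x pmf) \<Rightarrow> 'y list \<Rightarrow> 'x pmf" where
  "sXt sX zs = embed_pmf (wt sX zs)"

lemma pmf_sXt: "pmf (sXt sX zs) x = wt sX zs x"
  unfolding sXt_def
proof (rule pmf_embed_pmf)
  show "\<And>x. 0 \<le> wt sX zs x" by (rule wt_nonneg)
  have "(\<integral>\<^sup>+ x. ennreal (wt sX zs x) \<partial>count_space UNIV) = (\<Sum>x\<in>UNIV. ennreal (wt sX zs x))"
    by (simp add: nn_integral_count_space_finite)
  also have "\<dots> = ennreal (\<Sum>x\<in>UNIV. wt sX zs x)" by (simp add: wt_nonneg)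
  finally show "(\<integral>\<^sup>+ x. ennreal (wt sX zs x) \<partial>count_space UNIV) = 1" by (simp add: wt_sum)
qed

definition gg :: "('x::finite \<times> 'y::finite \<Rightarrow> real) \<Rightarrow> (('x \<times> 'y) list \<Rightarrow> 'x pmf) \<Rightarrow> 'y list \<Rightarrow> real" where
  "gg phi sX zs = (\<Sum>x\<in>UNIV. pmf (sXt sX (butlast zs)) x * phi (x, last zs))"

lemma pmf_avg_bound:
  fixes phi :: "'x::finite \<times> 'y::finite \<Rightarrow> real"
  shows "\<bar>\<Sum>x\<in>UNIV. pmf p x * phi (x, y)\<bar> \<le> (\<Sum>a\<in>UNIV. \<bar>phi a\<bar>)"
proof -
  let ?M = "(\<Sum>a\<in>UNIV. \<bar>phi a\<bar>)"
  have b: "\<bar>phi a\<bar> \<le> ?M" for a by (rule member_le_sum) auto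
  have "\<bar>\<Sum>x\<in>UNIV. pmf p x * phi (x, y)\<bar> \<le> (\<Sum>x\<in>UNIV. \<bar>pmf p x * phi (x, y)\<bar>)"
    by (rule sum_abs)
  also have "\<dots> \<le> (\<Sum>x\<in>UNIV. pmf p x * ?M)"
    by (intro sum_mono) (simp add: abs_mult mult_left_mono b)
  also have "\<dots> = ?M" by (simp add: sum_distrib_right[symmetric] sum_pmf_eq_1)
  finally show ?thesis .
qed

lemma gg_bound: "\<bar>gg phi sX zs\<bar> \<le> (\<Sum>a\<in>UNIV. \<bar>phi a\<bar>)"
  unfolding gg_def by (rule pmf_avg_bound)

lemma sum_ret:
  fixes phi :: "'x::finite \<times> 'y::finite \<Rightarrow> real"
  shows "(\<Sum>a\<in>UNIV. pmf p (fst a) * pmf (return_pmf c) (snd a) * phi a) = (\<Sum>x\<in>UNIV. pmf p x * phi (x, c))"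
proof -
  have "(\<Sum>a\<in>UNIV. pmf p (fst a) * pmf (return_pmf c) (snd a) * phi a)
     = (\<Sum>x\<in>UNIV. \<Sum>y\<in>UNIV. pmf p x * indicator {y} c * phi (x, y))"
    by (simp add: UNIV_Times_UNIV[symmetric] sum.cartesian_product case_prod_beta del: UNIV_Times_UNIV)
  also have "\<dots> = (\<Sum>x\<in>UNIV. pmf p x * phi (x, c))"
  proof (intro sum.cong refl)
    fix x
    have "(\<Sum>y\<in>UNIV. pmf p x * indicator {y} c * phi (x, y)) = (\<Sum>y\<in>UNIV. if y = c then pmf p x * phi (x, y) else 0)"
      by (intro sum.cong refl) (auto simp: indicator_def)
    also have "\<dots> = pmf p x * phi (x, c)" by (simp add: sum.delta')
    finally show "(\<Sum>y\<in>UNIV. pmf p x * indicator {y} c * phi (x, y)) = pmf p x * phi (x, c)" .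
  qed
  finally show ?thesis .
qed

lemma core:
  fixes phi :: "'x::finite \<times> 'y::finite \<Rightarrow> real" and ys :: "nat \<Rightarrow> 'y"
  shows "stage_exp phi sX (\<lambda>h. return_pmf (ys (length h))) t = gg phi sX (map ys [0..<Suc t])"
proof -
  let ?sYd = "\<lambda>h::('x \<times> 'y) list. return_pmf (ys (length h))"
  let ?zs = "map ys [0..<t]"
  have hpeq: "hist_prob sX (sYz ?zs) h = hist_prob sX ?sYd h" if "length h = t" for h
    using that by (intro hp_cong) (auto simp: sYz_def)
  have "stage_exp phi sX ?sYd t = (\<Sum>h0\<in>{h. length h = t}. \<Sum>a\<in>UNIV. hist_prob sX ?sYd h0 *
      (pmf (sX h0) (fst a) * pmf (return_pmf (ys t)) (snd a)) * phi a)"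
    unfolding stage_exp_def sum_len_Suc by (intro sum.cong refl) (auto simp: hp_snoc)
  also have "\<dots> = (\<Sum>h0\<in>{h. length h = t}. hist_prob sX ?sYd h0 * (\<Sum>x\<in>UNIV. pmf (sX h0) x * phi (x, ys t)))"
    by (intro sum.cong refl) (simp add: sum_ret[symmetric] sum_distrib_left mult_ac)
  also have "\<dots> = (\<Sum>h0\<in>{h. length h = t}. hist_prob sX (sYz ?zs) h0 * (\<Sum>x\<in>UNIV. pmf (sX h0) x * phi (x, ys t)))"
    by (intro sum.cong refl) (simp add: hpeq)
  also have "\<dots> = (\<Sum>x\<in>UNIV. wt sX ?zs x * phi (x, ys t))"
    unfolding wt_def by (simp add: sum_distrib_left sum_distrib_right sum.swap[of _ UNIV] mult_ac)
  also have "\<dots> = gg phi sX (map ys [0..<Suc t])"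
    unfolding gg_def by (simp add: pmf_sXt)
  finally show ?thesis .
qed

lemma partial_bound:
  fixes phi :: "'x::finite \<times> 'y::finite \<Rightarrow> real" and ys :: "'y list"
  assumes lam0: "0 \<le> lam" and lam1: "lam < 1" and auto: "autocratic phi lam sX"
  shows "\<bar>\<Sum>t<length ys. lam^t * gg phi sX (take (Suc t) ys)\<bar>
           \<le> (\<Sum>a\<in>UNIV. \<bar>phi a\<bar>) * lam ^ length ys / (1 - lam)"
proof -
  let ?M = "(\<Sum>a\<in>UNIV. \<bar>phi a\<bar>)"
  define T where "T = length ys"
  define ys' where "ys' = (\<lambda>t. if t < T then ys ! t else undefined)"
  define f where "f = (\<lambda>t. lam^t * gg phi sX (map ys' [0..<Suc t]))"
  let ?sYd = "\<lambda>h::('x \<times> 'y) list. return_pmf (ys' (length h))"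
  have fe: "f = (\<lambda>t. lam^t * stage_exp phi sX ?sYd t)"
    unfolding f_def by (simp add: core)
  have fb: "norm (f t) \<le> ?M * lam^t" for t
  proof -
    have "norm (f t) = lam^t * \<bar>gg phi sX (map ys' [0..<Suc t])\<bar>"
      unfolding f_def using lam0 by (simp add: abs_mult)
    also have "\<dots> \<le> lam^t * ?M" using lam0 by (intro mult_left_mono gg_bound) auto
    finally show ?thesis by (simp add: mult_ac)
  qed
  have sg: "summable (\<lambda>t. ?M * lam^t)"
    using lam0 lam1 by (intro summable_mult summable_geometric) simp
  have sf: "summable f" by (rule summable_comparison_test'[OF sg fb])
  have "disc_payoff phi lam sX ?sYd = 0" using auto unfolding autocratic_def by blast
  then have "(1 - lam) * suminf f = 0" unfolding disc_payoff_def fe by simp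
  then have s0: "suminf f = 0" using lam1 by simp
  have split: "suminf f = (\<Sum>n. f (n + T)) + (\<Sum>i<T. f i)"
    by (rule suminf_split_initial_segment[OF sf])
  have pe: "(\<Sum>i<T. f i) = (\<Sum>t<T. lam^t * gg phi sX (take (Suc t) ys))"
  proof (intro sum.cong refl)
    fix t assume "t \<in> {..<T}"
    then have "map ys' [0..<Suc t] = take (Suc t) ys"
      by (intro nth_equalityI) (auto simp: ys'_def T_def nth_append less_Suc_eq)
    then show "f t = lam^t * gg phi sX (take (Suc t) ys)" unfolding f_def by simp
  qed
  have tb: "norm (\<Sum>n. f (n + T)) \<le> (\<Sum>n. (?M * lam^T) * lam^n)"
  proof (rule norm_suminf_le)
    show "norm (f (n + T)) \<le> ?M * lam ^ T * lam ^ n" for n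
    proof -
      have e: "?M * lam ^ (n + T) = ?M * lam ^ T * lam ^ n" by (simp add: power_add algebra_simps)
      show ?thesis using fb[of "n+T"] unfolding e .
    qed
    show "summable (\<lambda>n. ?M * lam ^ T * lam ^ n)"
      using lam0 lam1 by (intro summable_mult summable_geometric) simp
  qed
  also have "\<dots> = (?M * lam^T) * (1 / (1 - lam))"
    using lam0 lam1 by (subst suminf_mult) (auto simp: suminf_geometric)
  finally have tb2: "norm (\<Sum>n. f (n + T)) \<le> ?M * lam^T / (1 - lam)" by simp
  have "(\<Sum>i<T. f i) = - (\<Sum>n. f (n + T))" using split s0 by linarith
  then have "\<bar>\<Sum>i<T. f i\<bar> = norm (\<Sum>n. f (n + T))" by simp
  with tb2 have "\<bar>\<Sum>i<T. f i\<bar> \<le> ?M * lam^T / (1 - lam)" by simp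
  then show ?thesis using pe T_def by simp
qed

lemma pair_lemma:
  fixes phi :: "'x::finite \<times> 'y::finite \<Rightarrow> real"
  shows "(\<Sum>a\<in>UNIV. pmf p (fst a) * pmf q (snd a) * phi a)
       = (\<Sum>a\<in>UNIV. pmf p (fst a) * pmf q (snd a) * (\<Sum>x\<in>UNIV. pmf p x * phi (x, snd a)))"
proof -
  define G where "G y = (\<Sum>x\<in>UNIV. pmf p x * phi (x, y))" for y
  have "(\<Sum>a\<in>UNIV. pmf p (fst a) * pmf q (snd a) * phi a)
      = (\<Sum>x\<in>UNIV. \<Sum>y\<in>UNIV. pmf p x * pmf q y * phi (x, y))"
    by (simp add: UNIV_Times_UNIV[symmetric] sum.cartesian_product case_prod_beta del: UNIV_Times_UNIV)
  also have "\<dots> = (\<Sum>y\<in>UNIV. pmf q y * G y)"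
    unfolding G_def by (subst sum.swap) (simp add: sum_distrib_left mult_ac)
  finally have L: "(\<Sum>a\<in>UNIV. pmf p (fst a) * pmf q (snd a) * phi a) = (\<Sum>y\<in>UNIV. pmf q y * G y)" .
  have "(\<Sum>a\<in>UNIV. pmf p (fst a) * pmf q (snd a) * G (snd a))
      = (\<Sum>x\<in>UNIV. \<Sum>y\<in>UNIV. pmf p x * (pmf q y * G y))"
    by (simp add: UNIV_Times_UNIV[symmetric] sum.cartesian_product case_prod_beta mult_ac del: UNIV_Times_UNIV)
  also have "\<dots> = (\<Sum>x\<in>UNIV. pmf p x * (\<Sum>y\<in>UNIV. pmf q y * G y))"
    by (simp add: sum_distrib_left)
  also have "\<dots> = (\<Sum>x\<in>UNIV. pmf p x) * (\<Sum>y\<in>UNIV. pmf q y * G y)"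
    by (simp add: sum_distrib_right)
  also have "\<dots> = (\<Sum>y\<in>UNIV. pmf q y * G y)" by (simp add: sum_pmf_eq_1)
  finally show ?thesis using L unfolding G_def by simp
qed

lemma stepA:
  fixes phi :: "'x::finite \<times> 'y::finite \<Rightarrow> real" and sY :: "('x \<times> 'y) list \<Rightarrow> 'y pmf"
  shows "(\<Sum>a\<in>UNIV. hist_prob (opp_cond (sXt sX)) sY (h0 @ [a]) * phi (last (h0 @ [a])))
       = (\<Sum>a\<in>UNIV. hist_prob (opp_cond (sXt sX)) sY (h0 @ [a]) * gg phi sX (map snd (h0 @ [a])))"
proof -
  let ?p = "sXt sX (map snd h0)"
  have "(\<Sum>a\<in>UNIV. hist_prob (opp_cond (sXt sX)) sY (h0 @ [a]) * phi (last (h0 @ [a])))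
      = hist_prob (opp_cond (sXt sX)) sY h0 * (\<Sum>a\<in>UNIV. pmf ?p (fst a) * pmf (sY h0) (snd a) * phi a)"
    unfolding hp_snoc opp_cond_def last_snoc sum_distrib_left by (simp only: mult.assoc)
  also have "\<dots> = hist_prob (opp_cond (sXt sX)) sY h0 * (\<Sum>a\<in>UNIV. pmf ?p (fst a) * pmf (sY h0) (snd a) * (\<Sum>x\<in>UNIV. pmf ?p x * phi (x, snd a)))"
    by (subst pair_lemma[of ?p "sY h0" phi]) (rule refl)
  also have "\<dots> = (\<Sum>a\<in>UNIV. hist_prob (opp_cond (sXt sX)) sY (h0 @ [a]) * gg phi sX (map snd (h0 @ [a])))"
    unfolding hp_snoc opp_cond_def gg_def map_append list.map butlast_snoc last_snoc snd_conv sum_distrib_left by (simp only: mult.assoc)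
  finally show ?thesis .
qed

theorem proposition3:
  fixes phi :: "'x::finite \<times> 'y::finite \<Rightarrow> real" and lam :: real
    and sX :: "('x \<times> 'y) list \<Rightarrow> 'x pmf"
  assumes "0 \<le> lam" and "lam < 1" and "autocratic phi lam sX"
  shows "\<exists>sXt :: 'y list \<Rightarrow> 'x pmf. autocratic phi lam (opp_cond sXt)"
proof (intro exI[of _ "sXt sX"], unfold autocratic_def, intro allI)
  fix sY :: "('x \<times> 'y) list \<Rightarrow> 'y pmf"
  let ?M = "(\<Sum>a\<in>UNIV. \<bar>phi a\<bar>)"
  let ?sXo = "opp_cond (sXt sX)"
  define W where "W h = hist_prob ?sXo sY h" for h
  define e where "e t = stage_exp phi ?sXo sY t" for t
  have A: "e t = (\<Sum>h\<in>{h. length h = Suc t}. W h * gg phi sX (map snd h))" for t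
    unfolding e_def stage_exp_def W_def sum_len_Suc by (rule sum.cong[OF refl stepA])
  define F where "F T h = (\<Sum>t<T. lam^t * gg phi sX (take (Suc t) (map snd h)))" for T and h :: "('x \<times> 'y) list"
  have B: "(\<Sum>t<T. lam^t * e t) = (\<Sum>h\<in>{h. length h = T}. W h * F T h)" for T
  proof -
    have "e t = (\<Sum>h\<in>{h. length h = T}. W h * gg phi sX (take (Suc t) (map snd h)))" if "t < T" for t
    proof -
      have eqT: "T = Suc t + (T - Suc t)" using that by simp
      have "(\<Sum>h\<in>{h. length h = T}. W h * gg phi sX (take (Suc t) (map snd h)))
          = (\<Sum>h\<in>{h::('x \<times> 'y) list. length h = Suc t + (T - Suc t)}. hist_prob ?sXo sY h * (\<lambda>h. gg phi sX (map snd h)) (take (Suc t) h))"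
        using eqT by (simp add: W_def take_map)
      also have "\<dots> = (\<Sum>h\<in>{h. length h = Suc t}. hist_prob ?sXo sY h * gg phi sX (map snd h))"
        by (rule marg)
      finally show ?thesis using A W_def by simp
    qed
    then have "(\<Sum>t<T. lam^t * e t) = (\<Sum>t<T. \<Sum>h\<in>{h. length h = T}. lam^t * (W h * gg phi sX (take (Suc t) (map snd h))))"
      by (simp add: sum_distrib_left)
    also have "\<dots> = (\<Sum>h\<in>{h. length h = T}. W h * F T h)"
      unfolding F_def by (subst sum.swap) (simp add: sum_distrib_left mult_ac)
    finally show ?thesis .
  qed
  have C: "norm (\<Sum>t<T. lam^t * e t) \<le> ?M * lam^T / (1 - lam)" for T
  proof -
    have "\<bar>\<Sum>h\<in>{h. length h = T}. W h * F T h\<bar> \<le> (\<Sum>h\<in>{h. length h = T}. W h * (?M * lam^T / (1 - lam)))"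
    proof -
      have "\<bar>\<Sum>h\<in>{h. length h = T}. W h * F T h\<bar> \<le> (\<Sum>h\<in>{h. length h = T}. \<bar>W h * F T h\<bar>)"
        by (rule sum_abs)
      also have "\<dots> \<le> (\<Sum>h\<in>{h. length h = T}. W h * (?M * lam^T / (1 - lam)))"
      proof (intro sum_mono)
        fix h :: "('x \<times> 'y) list" assume "h \<in> {h. length h = T}"
        then have "length (map snd h) = T" by simp
        then have fb: "\<bar>F T h\<bar> \<le> ?M * lam^T / (1 - lam)"
          using partial_bound[OF assms, of "map snd h"] unfolding F_def by simp
        have w0: "0 \<le> W h" unfolding W_def by (rule hp_nonneg)
        have "\<bar>W h * F T h\<bar> = W h * \<bar>F T h\<bar>" using w0 by (simp add: abs_mult)
        also have "\<dots> \<le> W h * (?M * lam^T / (1 - lam))" by (rule mult_left_mono[OF fb w0])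
        finally show "\<bar>W h * F T h\<bar> \<le> W h * (?M * lam^T / (1 - lam))" .
      qed
      finally show ?thesis .
    qed
    also have "\<dots> = ?M * lam^T / (1 - lam)"
      unfolding W_def sum_distrib_right[symmetric] hp_sum1 by simp
    finally show ?thesis using B by simp
  qed
  have lim0: "(\<lambda>T. ?M * lam^T / (1 - lam)) \<longlonglongrightarrow> 0"
    using assms(1,2) by (intro tendsto_divide_zero tendsto_mult_right_zero LIMSEQ_power_zero) simp
  have "(\<lambda>T. \<Sum>t<T. lam^t * e t) \<longlonglongrightarrow> 0"
    by (rule Lim_null_comparison[OF always_eventually[OF allI[OF C]] lim0])
  then have "(\<lambda>t. lam^t * e t) sums 0" unfolding sums_def .
  then have "(\<Sum>t. lam^t * e t) = 0" by (rule sums_unique[symmetric])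
  then show "disc_payoff phi lam ?sXo sY = 0" unfolding disc_payoff_def e_def by simp
qed

end
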